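(* Let $q\ge2$ and $s\ge2$ be integers. There exist constants $\varepsilon_0>0$, $\delta_0>0$, $L_0>0$, $C>0$ and $k_0\in\mathbb{N}$ (depending only on $q,s$) such that the following holds. Suppose $f\colon\mathbb{N}_0\to\mathbb{U}$ is $q$-multiplicative, $p\in\mathbb{R}[x]$ with $\deg p<s$, and for some $\varepsilon<\varepsilon_0$, $\delta<\delta_0$ and $L\ge L_0$ we have: for all but at most $\delta q^L$ integers $n\in\{0,\dots,q^L-1\}$, $f(n)=e(p(n)+\theta_n)$ with $|\theta_n|\le\varepsilon$. Then there exist $\alpha,\beta\in\mathbb{R}$ and $b\in\mathbb{Q}[x]$ such that $n\mapsto b(n)\bmod 1$ is periodic with period $q^{k}$ for some $k\le k_0$, and for all but at most $\delta q^L$ integers $n\in\{0,\dots,q^L-1\}$, $f(n)=e(\alpha n+\beta+b(n)+\theta'_n)$ with $|\theta'_n|\le C\varepsilon$.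
   Context: $\mathbb{N}_0=\{0,1,\dots\}$, $\mathbb{U}=\{z\in\mathbb{C}:|z|=1\}$, $e(t)=e^{2\pi i t}$. $f$ is $q$-multiplicative if $f(m+n)=f(m)f(n)$ whenever $t,m,n\ge0$, $m<q^t$, $q^t\mid n$. *)

theory Defs
  imports "HOL-Analysis.Analysis" "HOL-Computational_Algebra.Polynomial"
begin

definition e :: "real \<Rightarrow> complex" where
  "e t = exp (2 * pi * \<i> * complex_of_real t)"

definition q_multiplicative :: "nat \<Rightarrow> (nat \<Rightarrow> complex) \<Rightarrow> bool" where
  "q_multiplicative q f \<longleftrightarrow>
     (\<forall>t m n. m < q ^ t \<and> q ^ t dvd n \<longrightarrow> f (m + n) = f m * f n)"

end

theory Submission
  imports Defs
begin
fun cD :: "(nat \<Rightarrow> real) \<Rightarrow> nat list \<Rightarrow> nat \<Rightarrow> real" where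
  "cD g [] a = g a"
| "cD g (x#xs) a = cD g xs (a+x) - cD g xs a"

fun cvert :: "nat list \<Rightarrow> nat \<Rightarrow> nat set" where
  "cvert [] a = {a}"
| "cvert (x#xs) a = cvert xs a \<union> cvert xs (a+x)"

lemma cD_shift: "cD g xs (a+x) = cD (\<lambda>n. g (n+x)) xs a"
proof (induction xs arbitrary: a)
  case Nil then show ?case by simp
next
  case (Cons y ys)
  have "cD g (y#ys) (a+x) = cD g ys ((a+y)+x) - cD g ys (a+x)" by (simp add: ac_simps)
  then show ?case using Cons by simp
qed

lemma cD_diff: "cD (\<lambda>n. g n - h n) xs a = cD g xs a - cD h xs a"
  by (induction xs arbitrary: a) simp_all

lemma cD_add: "cD (\<lambda>n. g n + h n) xs a = cD g xs a + cD h xs a"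
  by (induction xs arbitrary: a) simp_all

lemma cD_cmult: "cD (\<lambda>n. c * g n) xs a = c * cD g xs a"
  by (induction xs arbitrary: a) (simp_all add: right_diff_distrib)

lemma cD_sum: "cD (\<lambda>n. \<Sum>l\<in>A. h l n) xs a = (\<Sum>l\<in>A. cD (h l) xs a)"
  by (induction xs arbitrary: a) (simp_all add: sum_subtractf)

lemma cD_cong: "(\<forall>v\<in>cvert xs a. g v = h v) \<Longrightarrow> cD g xs a = cD h xs a"
  by (induction xs arbitrary: a) simp_all

lemma cD_Ints: "(\<forall>v\<in>cvert xs a. g v \<in> \<int>) \<Longrightarrow> cD g xs a \<in> \<int>"
  by (induction xs arbitrary: a) (simp_all add: Ints_diff)

lemma cD_bound: "(\<forall>v\<in>cvert xs a. \<bar>g v\<bar> \<le> B) \<Longrightarrow> \<bar>cD g xs a\<bar> \<le> 2 ^ length xs * B"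
proof (induction xs arbitrary: a)
  case Nil then show ?case by simp
next
  case (Cons x xs)
  have 1: "\<bar>cD g xs (a+x)\<bar> \<le> 2 ^ length xs * B" using Cons by simp
  have 2: "\<bar>cD g xs a\<bar> \<le> 2 ^ length xs * B" using Cons by simp
  show ?case using 1 2 by simp
qed

lemma cD_const_aux: "cD (\<lambda>_. c) xs a = (if xs = [] then c else 0)"
  by (induction xs arbitrary: a) simp_all

lemma cD_const: "xs \<noteq> [] \<Longrightarrow> cD (\<lambda>_. c) xs a = 0"
  by (simp add: cD_const_aux)

lemma cvert_ge: "v \<in> cvert xs a \<Longrightarrow> a \<le> v \<and> v \<le> a + sum_list xs"
  by (induction xs arbitrary: a) force+

lemma cvert_dvd: "(\<forall>x\<in>set xs. d dvd x) \<Longrightarrow> v \<in> cvert xs a \<Longrightarrow> d dvd (v - a)"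
proof (induction xs arbitrary: a)
  case Nil then show ?case by simp
next
  case (Cons x xs)
  show ?case
  proof (cases "v \<in> cvert xs a")
    case True then show ?thesis using Cons by simp
  next
    case False
    then have "v \<in> cvert xs (a+x)" using Cons by simp
    then have "d dvd (v - (a+x))" "a + x \<le> v" using Cons cvert_ge by auto
    moreover have "d dvd x" using Cons by simp
    moreover have "v - a = (v - (a+x)) + x" using \<open>a + x \<le> v\<close> by arith
    ultimately show ?thesis by (metis dvd_add)
  qed
qed

lemma cvert_rep: "v \<in> cvert (replicate n x) a \<Longrightarrow> \<exists>m\<le>n. v = a + m*x"
proof (induction n arbitrary: a)
  case 0 then show ?case by simp
next
  case (Suc n)
  then have "v \<in> cvert (replicate n x) a \<or> v \<in> cvert (replicate n x) (a+x)" by simp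
  then show ?case
  proof
    assume "v \<in> cvert (replicate n x) a"
    then obtain m where "m \<le> n" "v = a + m*x" using Suc by blast
    then show ?thesis by (intro exI[of _ m]) simp
  next
    assume "v \<in> cvert (replicate n x) (a+x)"
    then obtain m where "m \<le> n" "v = a + x + m*x" using Suc by blast
    then show ?thesis by (intro exI[of _ "Suc m"]) simp
  qed
qed

lemma cD_mono: "i \<le> length xs \<Longrightarrow>
  cD (\<lambda>n. real n ^ i) xs a = (if i = length xs then fact i * prod_list (map real xs) else 0)"
proof (induction xs arbitrary: a i)
  case Nil then show ?case by simp
next
  case (Cons x xs)
  have "cD (\<lambda>n. real n ^ i) (x#xs) a = cD (\<lambda>n. (real n + real x) ^ i - real n ^ i) xs a"
    by (simp add: cD_shift cD_diff)
  also have "(\<lambda>n. (real n + real x) ^ i - real n ^ i) =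
     (\<lambda>n. \<Sum>l\<in>{..<i}. (of_nat (i choose l) * real x ^ (i - l)) * real n ^ l)"
  proof
    fix n
    have "(real n + real x) ^ i = (\<Sum>l\<le>i. of_nat (i choose l) * real n ^ l * real x ^ (i - l))"
      by (rule binomial_ring)
    also have "\<dots> = (\<Sum>l<i. of_nat (i choose l) * real n ^ l * real x ^ (i - l)) + real n ^ i"
      by (simp add: lessThan_Suc_atMost[symmetric])
    finally show "(real n + real x) ^ i - real n ^ i =
       (\<Sum>l\<in>{..<i}. (of_nat (i choose l) * real x ^ (i - l)) * real n ^ l)"
      by (simp add: algebra_simps)
  qed
  also have "cD \<dots> xs a = (\<Sum>l\<in>{..<i}. (of_nat (i choose l) * real x ^ (i - l)) * cD (\<lambda>n. real n ^ l) xs a)"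
    by (simp add: cD_sum cD_cmult)
  also have "\<dots> = (\<Sum>l\<in>{..<i}. (of_nat (i choose l) * real x ^ (i - l)) *
        (if l = length xs then fact l * prod_list (map real xs) else 0))"
    using Cons.prems by (intro sum.cong refl) (simp add: Cons.IH)
  also have "\<dots> = (if i = length (x#xs) then fact i * prod_list (map real (x#xs)) else 0)"
  proof (cases "i = length (x#xs)")
    case True
    then have "{..<i} = insert (length xs) {..<length xs}" by auto
    then have "(\<Sum>l\<in>{..<i}. (of_nat (i choose l) * real x ^ (i - l)) *
        (if l = length xs then fact l * prod_list (map real xs) else 0)) =
        (of_nat (i choose length xs) * real x ^ (i - length xs)) * (fact (length xs) * prod_list (map real xs))"
      by (simp add: sum.If_cases)
    also have "\<dots> = fact i * prod_list (map real (x#xs))"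
      using True by (simp add: fact_Suc algebra_simps)
    finally show ?thesis using True by simp
  next
    case False
    then have "i \<le> length xs" using Cons.prems by simp
    then show ?thesis using False by (intro trans[OF sum.neutral]) auto
  qed
  finally show ?case .
qed

lemma cD_poly: "degree P \<le> length xs \<Longrightarrow>
  cD (\<lambda>n. poly P (real n)) xs a = fact (length xs) * coeff P (length xs) * prod_list (map real xs)"
proof -
  assume d: "degree P \<le> length xs"
  have "(\<lambda>n. poly P (real n)) = (\<lambda>n. \<Sum>i\<le>length xs. coeff P i * real n ^ i)"
  proof
    fix n
    show "poly P (real n) = (\<Sum>i\<le>length xs. coeff P i * real n ^ i)"
      unfolding poly_altdef
      by (rule sum.mono_neutral_left) (use d le_degree in auto)
  qed
  then have "cD (\<lambda>n. poly P (real n)) xs a = (\<Sum>i\<le>length xs. coeff P i * cD (\<lambda>n. real n ^ i) xs a)"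
    by (simp add: cD_sum cD_cmult)
  also have "\<dots> = (\<Sum>i\<le>length xs. coeff P i * (if i = length xs then fact i * prod_list (map real xs) else 0))"
    by (intro sum.cong refl) (simp add: cD_mono)
  also have "\<dots> = (\<Sum>i\<le>length xs. if i = length xs then coeff P i * (fact i * prod_list (map real xs)) else 0)"
    by (intro sum.cong refl) auto
  also have "\<dots> = fact (length xs) * coeff P (length xs) * prod_list (map real xs)"
    by (subst sum.delta) auto
  finally show ?thesis .
qed

lemma chain:
  fixes Z0 E :: real and Q :: nat
  assumes Q: "Q \<ge> 2" and E: "(real Q + 1) * E < 1"
    and h: "\<forall>i\<le>J. \<exists>n::int. \<bar>Z0 * real Q ^ i - n\<bar> \<le> E"
  shows "\<exists>N::int. \<bar>Z0 - N\<bar> \<le> E / real Q ^ J"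
  using h
proof (induction J arbitrary: Z0)
  case 0 then show ?case by auto
next
  case (Suc J)
  have "\<forall>i\<le>J. \<exists>n::int. \<bar>(Z0 * Q) * real Q ^ i - n\<bar> \<le> E"
  proof (intro allI impI)
    fix i assume "i \<le> J"
    then obtain n :: int where "\<bar>Z0 * real Q ^ Suc i - n\<bar> \<le> E" using Suc.prems by blast
    then show "\<exists>n::int. \<bar>(Z0 * Q) * real Q ^ i - n\<bar> \<le> E" by (intro exI[of _ n]) (simp add: ac_simps)
  qed
  then obtain M :: int where M: "\<bar>Z0 * Q - M\<bar> \<le> E / real Q ^ J" using Suc.IH by blast
  obtain N0 :: int where N0: "\<bar>Z0 - N0\<bar> \<le> E" using Suc.prems by fastforce
  have E0: "E \<ge> 0" using N0 by linarith
  have Qp: "real Q ^ J \<ge> 1" using Q by simp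
  have "E * 1 \<le> E * real Q ^ J" using E0 Qp by (intro mult_left_mono) auto
  then have "E / real Q ^ J \<le> E" using Qp E0 by (simp add: divide_le_eq)
  have "\<bar>real Q * (Z0 - N0)\<bar> \<le> real Q * E" using N0 Q by (simp add: abs_mult)
  then have "\<bar>real_of_int M - real Q * N0\<bar> < 1"
    using M \<open>E / real Q ^ J \<le> E\<close> E by (simp add: algebra_simps abs_if split: if_splits) 
  then have "real_of_int \<bar>M - int Q * N0\<bar> < 1" by simp
  then have "\<bar>M - int Q * N0\<bar> < 1" by linarith
  then have MQ: "M = int Q * N0" by linarith
  have "\<bar>real Q * (Z0 - N0)\<bar> \<le> E / real Q ^ J" using M MQ by (simp add: algebra_simps)
  then have "real Q * \<bar>Z0 - N0\<bar> \<le> E / real Q ^ J" using Q by (simp add: abs_mult)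
  then have "\<bar>Z0 - N0\<bar> * real Q \<le> E / real Q ^ J" by (simp add: mult.commute)
  then have "\<bar>Z0 - N0\<bar> \<le> E / real Q ^ J / real Q" using Q by (subst pos_le_divide_eq) auto
  moreover have "E / real Q ^ J / real Q = E / real Q ^ Suc J"
    by (metis divide_divide_eq_left power_Suc2)
  ultimately show ?case by (intro exI[of _ N0]) (simp only:)
qed

definition bp :: "nat \<Rightarrow> 'a::field_char_0 poly" where
  "bp k = smult (1 / fact k) (\<Prod>i<k. [:- of_nat i, 1:])"

lemma poly_bp: "poly (bp k) (of_nat n :: 'a::field_char_0) = of_nat (n choose k)"
proof -
  have "poly (bp k) (of_nat n :: 'a) = (\<Prod>i<k. of_nat n - of_nat i) / fact k"
    by (simp add: bp_def poly_prod)
  also have "\<dots> = (of_nat n :: 'a) gchoose k"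
    by (simp add: gbinomial_prod_rev atLeast0LessThan)
  also have "\<dots> = of_nat (n choose k)" by (simp add: binomial_gbinomial)
  finally show ?thesis .
qed

lemma degree_bp: "degree (bp k :: 'a::field_char_0 poly) = k"
  unfolding bp_def by (subst degree_smult_eq) (simp add: degree_prod_eq_sum_degree)

lemma coeff_bp: "coeff (bp k :: 'a::field_char_0 poly) k = 1 / fact k"
proof -
  have "lead_coeff (\<Prod>i<k. [:- of_nat i, 1:] :: 'a poly) = 1" by (simp add: lead_coeff_prod)
  moreover have "degree (\<Prod>i<k. [:- of_nat i, 1:] :: 'a poly) = k" by (simp add: degree_prod_eq_sum_degree)
  ultimately show ?thesis by (simp add: bp_def)
qed

lemma pow_dvd_cancel:
  fixes q i Y m k :: nat
  assumes q: "q \<ge> 1" and i: "1 \<le> i" "i \<le> k" and d: "q ^ (m + k) dvd i * Y"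
  shows "q ^ m dvd Y"
proof (cases "Y = 0")
  case True then show ?thesis by simp
next
  case False
  show ?thesis
  proof (rule multiplicity_le_imp_dvd)
    show "q ^ m \<noteq> 0" using q by simp
    fix p :: nat assume p: "prime p"
    have q0: "q \<noteq> 0" using q by simp
    have iY: "i * Y \<noteq> 0" using False i by simp
    have "multiplicity p (q ^ (m+k)) \<le> multiplicity p (i * Y)"
      using d iY by (rule dvd_imp_multiplicity_le)
    also have "multiplicity p (i * Y) = multiplicity p i + multiplicity p Y"
      using p False i by (simp add: prime_elem_multiplicity_mult_distrib)
    finally have 1: "(m + k) * multiplicity p q \<le> multiplicity p i + multiplicity p Y"
      using p q0 by (simp add: prime_elem_multiplicity_power_distrib)
    have "p ^ multiplicity p i dvd i" by (rule multiplicity_dvd)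
    then have "p ^ multiplicity p i \<le> i" using i by (simp add: dvd_imp_le)
    moreover have "2 ^ multiplicity p i \<le> p ^ multiplicity p i"
      using p prime_ge_2_nat power_mono by blast
    moreover have "multiplicity p i < 2 ^ multiplicity p i" by (rule less_exp)
    ultimately have 2: "multiplicity p i < i" by linarith
    show "multiplicity p (q ^ m) \<le> multiplicity p Y"
    proof (cases "multiplicity p q = 0")
      case True then show ?thesis using p q0 by (simp add: prime_elem_multiplicity_power_distrib)
    next
      case False
      then have kk: "k \<le> k * multiplicity p q" by simp
      have "multiplicity p (q ^ m) = m * multiplicity p q"
        using p q0 by (simp add: prime_elem_multiplicity_power_distrib)
      moreover have "(m + k) * multiplicity p q = m * multiplicity p q + k * multiplicity p q"
        by (simp add: algebra_simps)
      ultimately show ?thesis using 1 2 i kk by linarith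
    qed
  qed
qed

lemma binom_per:
  fixes q :: nat assumes q: "q \<ge> 1"
  shows "q ^ m dvd ((n + w * q ^ (m + k)) choose k) - (n choose k)"
proof -
  let ?X = "w * q ^ (m + k)"
  have "(n + ?X) choose k = (\<Sum>i\<le>k. (?X choose i) * (n choose (k - i)))"
    by (subst add.commute) (rule vandermonde[symmetric])
  also have "{..k} = insert 0 {1..k}" by auto
  also have "(\<Sum>i\<in>insert 0 {1..k}. (?X choose i) * (n choose (k - i))) =
      (n choose k) + (\<Sum>i\<in>{1..k}. (?X choose i) * (n choose (k - i)))"
    by (subst sum.insert) auto
  finally have eq: "((n + ?X) choose k) - (n choose k) = (\<Sum>i\<in>{1..k}. (?X choose i) * (n choose (k - i)))"
    by simp
  have "q ^ m dvd (?X choose i)" if i: "i \<in> {1..k}" for i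
  proof (rule pow_dvd_cancel[OF q _ _ , of i k])
    show "1 \<le> i" "i \<le> k" using i by auto
    have "i * (?X choose i) = ?X * (?X - 1 choose (i - 1))"
      using i by (intro times_binomial_minus1_eq) auto
    then show "q ^ (m + k) dvd i * (?X choose i)" by simp
  qed
  then show ?thesis unfolding eq by (intro dvd_sum dvd_mult2) auto
qed

definition perZ :: "rat poly \<Rightarrow> nat \<Rightarrow> bool" where
  "perZ b T \<longleftrightarrow> (\<forall>n t. poly b (of_nat (n + t * T)) - poly b (of_nat n) \<in> \<int>)"

lemma perZ_add: "perZ b1 T \<Longrightarrow> perZ b2 T \<Longrightarrow> perZ (b1 + b2) T"
  unfolding perZ_def
proof (intro allI)
  fix n t
  assume a: "\<forall>n t. poly b1 (of_nat (n + t * T)) - poly b1 (of_nat n) \<in> \<int>"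
     and b: "\<forall>n t. poly b2 (of_nat (n + t * T)) - poly b2 (of_nat n) \<in> \<int>"
  have "poly (b1 + b2) (of_nat (n + t * T)) - poly (b1 + b2) (of_nat n) =
     (poly b1 (of_nat (n + t * T)) - poly b1 (of_nat n)) + (poly b2 (of_nat (n + t * T)) - poly b2 (of_nat n))"
    by simp
  then show "poly (b1 + b2) (of_nat (n + t * T)) - poly (b1 + b2) (of_nat n) \<in> \<int>"
    using a b by (metis Ints_add)
qed

lemma perZ_mult: "perZ b T \<Longrightarrow> perZ b (c * T)"
  unfolding perZ_def by (metis mult.assoc)

lemma perZ_pow: "perZ b (q ^ K) \<Longrightarrow> K \<le> K' \<Longrightarrow> perZ b (q ^ K')"
  using perZ_mult[of b "q^K" "q^(K'-K)"] by (simp add: power_add[symmetric])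

lemma perZ_zero: "perZ 0 T" by (simp add: perZ_def)

lemma perZ_bk: assumes q: "q \<ge> 1"
  shows "perZ (smult (of_int N / of_nat (q ^ m)) (bp k)) (q ^ (m + k))"
  unfolding perZ_def
proof (intro allI)
  fix n t
  obtain d where d: "((n + t * q ^ (m + k)) choose k) - (n choose k) = q ^ m * d"
    using binom_per[OF q, of m n t k] by (auto elim: dvdE)
  have le: "(n choose k) \<le> ((n + t * q ^ (m + k)) choose k)" by (rule binomial_right_mono) simp
  have "poly (smult (of_int N / of_nat (q ^ m)) (bp k)) (of_nat (n + t * q ^ (m + k))) -
        poly (smult (of_int N / of_nat (q ^ m)) (bp k)) (of_nat n :: rat)
      = (of_int N / of_nat (q ^ m)) * (of_nat ((n + t * q ^ (m + k)) choose k) - of_nat (n choose k))"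
    by (simp only: poly_smult poly_bp right_diff_distrib)
  also have "\<dots> = (of_int N / of_nat (q ^ m)) * of_nat (q ^ m * d)"
    using le d by (simp add: of_nat_diff[symmetric])
  also have "\<dots> = of_int (N * int d)" using q by simp
  finally show "poly (smult (of_int N / of_nat (q ^ m)) (bp k)) (of_nat (n + t * q ^ (m + k))) -
        poly (smult (of_int N / of_nat (q ^ m)) (bp k)) (of_nat n :: rat) \<in> \<int>" by simp
qed

definition cx :: "nat \<Rightarrow> nat \<Rightarrow> nat \<Rightarrow> nat list" where
  "cx q r j = q ^ j # replicate (r - 1) (q ^ (j + 1))"

definition HH :: "nat \<Rightarrow> real poly \<Rightarrow> real \<Rightarrow> nat \<Rightarrow> nat \<Rightarrow> nat \<Rightarrow> bool" where
  "HH q P E K0 L k \<longleftrightarrow> (\<forall>r j. 2 \<le> r \<and> r \<le> k \<and> K0 \<le> j \<and> j + 1 + r \<le> L \<longrightarrow>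
     (\<exists>a. (\<forall>v\<in>cvert (cx q r j) a. v < q ^ L) \<and>
          (\<exists>z::int. \<bar>cD (\<lambda>n. poly P (real n)) (cx q r j) a - z\<bar> \<le> E)))"

definition concl :: "nat \<Rightarrow> real poly \<Rightarrow> real \<Rightarrow> nat \<Rightarrow> nat \<Rightarrow> bool" where
  "concl q P B L K \<longleftrightarrow> (\<exists>\<alpha> \<beta> b. perZ b (q ^ K) \<and> (\<forall>n<q^L. \<exists>z::int.
      \<bar>poly P (real n) - \<alpha> * real n - \<beta> - real_of_rat (poly b (of_nat n)) - z\<bar> \<le> B))"

lemma length_cx: "r \<ge> 1 \<Longrightarrow> length (cx q r j) = r"
  by (simp add: cx_def)

lemma prod_cx: "r \<ge> 1 \<Longrightarrow> prod_list (map real (cx q r j)) = real q ^ (r * j + r - 1)"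
proof -
  assume r: "r \<ge> 1"
  have "prod_list (map real (cx q r j)) = real q ^ j * (real q ^ (j+1)) ^ (r - 1)"
    by (simp add: cx_def map_replicate_const prod_list_replicate)
  also have "\<dots> = real q ^ (j + (j+1) * (r - 1))" by (simp only: power_add power_mult)
  also have "j + (j+1) * (r - 1) = r * j + r - 1" using r
    by (cases r) (auto simp: algebra_simps)
  finally show ?thesis .
qed

lemma dvd_cx: "x \<in> set (cx q r j) \<Longrightarrow> q ^ j dvd x"
  by (auto simp: cx_def)

lemma base_case: "degree P \<le> 1 \<Longrightarrow> 0 \<le> B \<Longrightarrow> concl q P B L K"
proof -
  assume d: "degree P \<le> 1" and B: "0 \<le> B"
  have "\<forall>n<q^L. \<exists>z::int. \<bar>poly P (real n) - coeff P 1 * real n - coeff P 0 - real_of_rat (poly 0 (of_nat n)) - z\<bar> \<le> B"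
  proof (intro allI impI)
    fix n :: nat assume "n < q ^ L"
    have "poly P (real n) = coeff P 0 + coeff P 1 * real n"
      using d by (simp add: poly_altdef atMost_Suc) (cases "degree P"; simp add: coeff_eq_0)
    then show "\<exists>z::int. \<bar>poly P (real n) - coeff P 1 * real n - coeff P 0 - real_of_rat (poly 0 (of_nat n)) - z\<bar> \<le> B"
      using B by (intro exI[of _ 0]) simp
  qed
  then show ?thesis unfolding concl_def using perZ_zero by blast
qed

lemma step:
  fixes q kk K0 K1 K2 L2 L :: nat and M' E :: real and P :: "real poly"
  assumes q: "q \<ge> 2" and kk: "kk \<ge> 2"
    and K1: "K1 = kk - 1 + kk * K0 + kk" and K2: "K1 \<le> K2"
    and Mp: "M' > 0"
    and IH: "\<forall>P E L. degree P \<le> kk - 1 \<and> 0 \<le> E \<and> E * M' \<le> 1 \<and> L2 \<le> L \<and> HH q P E K1 L (kk - 1)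
               \<longrightarrow> concl q P (M' * E) L K2"
    and dP: "degree P \<le> kk" and E0: "0 \<le> E"
    and EM: "E * (real q ^ (kk^2+1) + M' * (1 + 2^kk * real q ^ (kk^2+1)) + 2 * (real q ^ kk + 1)) \<le> 1"
    and L2: "L2 \<le> L" and LK: "K0 + kk + 1 \<le> L"
    and H: "HH q P E K0 L kk"
  shows "concl q P ((real q ^ (kk^2+1) + M' * (1 + 2^kk * real q ^ (kk^2+1)) + 2 * (real q ^ kk + 1)) * E) L K2"
proof -
  define Bq where "Bq = real q ^ (kk^2+1)"
  define M where "M = Bq + M' * (1 + 2^kk * Bq) + 2 * (real q ^ kk + 1)"
  define m where "m = kk - 1 + kk * K0"
  define J where "J = L - 1 - kk - K0"
  define c where "c = coeff P kk"
  define Z0 where "Z0 = fact kk * c * real q ^ m"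
  have qpos: "real q > 0" using q by simp
  have Bq1: "Bq \<ge> 1" unfolding Bq_def by (rule one_le_power) (use q in simp)
  have EM': "E * M \<le> 1" using EM by (simp add: M_def Bq_def)
  have qk: "real q ^ kk \<ge> 0" by simp
  have "E * (2 * (real q ^ kk + 1)) \<le> E * M"
    using E0 Mp Bq1 by (intro mult_left_mono) (auto simp: M_def)
  then have EQ: "(real (q^kk) + 1) * E < 1" using EM' E0 qk by (simp add: algebra_simps)
  have qkk: "q ^ kk \<ge> 2"
  proof -
    have "q ^ 1 \<le> q ^ kk" using q kk by (intro power_increasing) auto
    then show ?thesis using q by simp
  qed
  have chainh: "\<forall>i\<le>J. \<exists>n::int. \<bar>Z0 * real (q^kk) ^ i - n\<bar> \<le> E"
  proof (intro allI impI)
    fix i assume i: "i \<le> J"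
    let ?j = "K0 + i"
    have "2 \<le> kk \<and> kk \<le> kk \<and> K0 \<le> ?j \<and> ?j + 1 + kk \<le> L" using i LK kk by (auto simp: J_def)
    then obtain a and z :: int where z: "\<bar>cD (\<lambda>n. poly P (real n)) (cx q kk ?j) a - z\<bar> \<le> E"
      using H unfolding HH_def by blast
    have "cD (\<lambda>n. poly P (real n)) (cx q kk ?j) a = fact kk * c * real q ^ (kk * ?j + kk - 1)"
      using cD_poly[of P "cx q kk ?j" a] dP kk by (simp add: length_cx prod_cx c_def)
    also have "kk * ?j + kk - 1 = m + kk * i" using kk by (simp add: m_def algebra_simps)
    also have "fact kk * c * real q ^ (m + kk * i) = Z0 * real (q^kk) ^ i"
      by (simp add: Z0_def power_add power_mult)
    finally show "\<exists>n::int. \<bar>Z0 * real (q^kk) ^ i - n\<bar> \<le> E" using z by auto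
  qed
  obtain N :: int where N: "\<bar>Z0 - N\<bar> \<le> E / real (q^kk) ^ J"
    using chain[of "q^kk" E J Z0] chainh EQ qkk by auto
  define \<eta> where "\<eta> = (Z0 - N) / (fact kk * real q ^ m)"
  have fpos: "fact kk * real q ^ m > 0" using qpos by simp
  have c_eq: "c = of_int N / (fact kk * real q ^ m) + \<eta>"
  proof -
    have "Z0 = c * (fact kk * real q ^ m)" by (simp add: Z0_def mult_ac)
    then have "\<eta> = c * (fact kk * real q ^ m) / (fact kk * real q ^ m) - of_int N / (fact kk * real q ^ m)"
      by (simp add: \<eta>_def diff_divide_distrib)
    also have "c * (fact kk * real q ^ m) / (fact kk * real q ^ m) = c" using fpos q by (intro nonzero_mult_div_cancel_right) simp
    finally show ?thesis by simp
  qed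
  have Leq: "L = J + 1 + kk + K0" using LK by (simp add: J_def)
  have Lsplit: "kk * L = (kk * J + m) + (kk^2 + 1)"
    using kk unfolding Leq m_def by (simp add: power2_eq_square algebra_simps)
  have eta_bound: "\<bar>\<eta>\<bar> * real q ^ (kk * L) \<le> E * Bq"
  proof -
    have "\<bar>\<eta>\<bar> * (fact kk * real q ^ m) = \<bar>Z0 - N\<bar>" using fpos q by (simp add: \<eta>_def abs_divide)
    moreover have "\<bar>\<eta>\<bar> * real q ^ m \<le> \<bar>\<eta>\<bar> * (fact kk * real q ^ m)"
    proof -
      have "real q ^ m \<le> fact kk * real q ^ m" using qpos by (simp add: fact_ge_1)
      then show ?thesis by (intro mult_left_mono) auto
    qed
    ultimately have "\<bar>\<eta>\<bar> * real q ^ m \<le> E / real q ^ (kk * J)"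
      using N by (simp add: power_mult)
    then have "\<bar>\<eta>\<bar> * real q ^ m * real q ^ (kk * J) \<le> E" using qpos by (simp add: le_divide_eq)
    then have "\<bar>\<eta>\<bar> * real q ^ m * real q ^ (kk * J) * Bq \<le> E * Bq" using Bq1 by (intro mult_right_mono) auto
    moreover have "\<bar>\<eta>\<bar> * real q ^ (kk * L) = \<bar>\<eta>\<bar> * real q ^ m * real q ^ (kk * J) * Bq"
      unfolding Lsplit Bq_def by (simp add: power_add mult_ac)
    ultimately show ?thesis by (simp only:)
  qed
  have eta_n: "\<bar>\<eta> * real n ^ kk\<bar> \<le> E * Bq" if n: "n < q ^ L" for n
  proof -
    have "real n ^ kk \<le> (real q ^ L) ^ kk"
      using n by (intro power_mono) (simp_all add: of_nat_less_iff[symmetric] less_imp_le del: of_nat_less_iff)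
    also have "\<dots> = real q ^ (kk * L)" by (simp add: power_mult[symmetric] mult.commute)
    finally have "\<bar>\<eta>\<bar> * real n ^ kk \<le> \<bar>\<eta>\<bar> * real q ^ (kk * L)" by (intro mult_left_mono) auto
    then show ?thesis using eta_bound by (simp add: abs_mult)
  qed
  define bk :: "rat poly" where "bk = smult (of_int N / of_nat (q ^ m)) (bp kk)"
  define rk :: "real poly" where "rk = smult (of_int N / of_nat (q ^ m)) (bp kk)"
  have rk_eval: "poly rk (real n) = real_of_rat (poly bk (of_nat n))" for n
    by (simp add: rk_def bk_def poly_bp of_rat_mult of_rat_divide of_rat_power)
  define P' where "P' = P - rk - monom \<eta> kk"
  have dP': "degree P' \<le> kk - 1"
  proof (rule degree_le, intro allI impI)
    fix i assume i: "kk - 1 < i"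
    have drk: "degree rk \<le> kk" unfolding rk_def using degree_smult_le[of _ "bp kk :: real poly"] degree_bp[where 'a=real] by simp
    show "coeff P' i = 0"
    proof (cases "i = kk")
      case True
      have "coeff rk kk = of_int N / real q ^ m * (1 / fact kk)" by (simp add: rk_def coeff_bp)
      then show ?thesis using True c_eq by (simp add: P'_def c_def field_simps)
    next
      case False
      then have "i > kk" using i by simp
      then show ?thesis using dP drk by (simp add: P'_def coeff_eq_0 coeff_monom)
    qed
  qed
  have perk: "perZ bk (q ^ K1)" unfolding bk_def K1
    using perZ_bk[of q N m kk] q by (simp add: m_def add.commute add.left_commute)
  define E' where "E' = E * (1 + 2^kk * Bq)"
  have HP': "HH q P' E' K1 L (kk - 1)"
    unfolding HH_def
  proof (intro allI impI)
    fix r j assume rj: "2 \<le> r \<and> r \<le> kk - 1 \<and> K1 \<le> j \<and> j + 1 + r \<le> L"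
    have "K0 \<le> kk * K0" using kk by simp
    then have "K0 \<le> K1" using K1 by linarith
    then have "2 \<le> r \<and> r \<le> kk \<and> K0 \<le> j \<and> j + 1 + r \<le> L" using rj by auto
    then obtain a and z :: int where av: "\<forall>v\<in>cvert (cx q r j) a. v < q^L"
      and z: "\<bar>cD (\<lambda>n. poly P (real n)) (cx q r j) a - z\<bar> \<le> E"
      using H unfolding HH_def by blast
    let ?xs = "cx q r j"
    have xsne: "?xs \<noteq> []" by (simp add: cx_def)
    have split: "(\<lambda>n. poly P' (real n)) = (\<lambda>n. (poly P (real n) - poly rk (real n)) - \<eta> * real n ^ kk)"
      by (simp add: P'_def poly_monom)
    have "cD (\<lambda>n. poly P' (real n)) ?xs a = cD (\<lambda>n. poly P (real n)) ?xs a - cD (\<lambda>n. poly rk (real n)) ?xs a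
          - cD (\<lambda>n. \<eta> * real n ^ kk) ?xs a"
      unfolding split
      using cD_diff[of "\<lambda>n. poly P (real n) - poly rk (real n)" "\<lambda>n. \<eta> * real n ^ kk"]
            cD_diff[of "\<lambda>n. poly P (real n)" "\<lambda>n. poly rk (real n)"] by simp
    moreover have rkint: "cD (\<lambda>n. poly rk (real n)) ?xs a \<in> \<int>"
    proof -
      have "\<forall>v\<in>cvert ?xs a. poly rk (real v) - poly rk (real a) \<in> \<int>"
      proof
        fix v assume v: "v \<in> cvert ?xs a"
        have "q^j dvd v - a" using cvert_dvd[OF _ v] dvd_cx by blast
        moreover have "q ^ K1 dvd q ^ j" using rj by (simp add: le_imp_power_dvd)
        ultimately obtain t where t: "v - a = t * q ^ K1" by (metis dvd_trans dvdE mult.commute)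
        moreover have "a \<le> v" using cvert_ge v by blast
        ultimately have "v = a + t * q^K1" by simp
        then have "poly bk (of_nat v) - poly bk (of_nat a) \<in> \<int>" using perk unfolding perZ_def by simp
        then obtain w where "poly bk (of_nat v) - poly bk (of_nat a) = of_int w" by (auto elim: Ints_cases)
        then have "real_of_rat (poly bk (of_nat v)) - real_of_rat (poly bk (of_nat a)) = of_int w"
          by (metis of_rat_diff of_rat_of_int_eq)
        then show "poly rk (real v) - poly rk (real a) \<in> \<int>" by (simp add: rk_eval)
      qed
      then have "cD (\<lambda>n. poly rk (real n) - poly rk (real a)) ?xs a \<in> \<int>" by (rule cD_Ints)
      moreover have "cD (\<lambda>n. poly rk (real n) - poly rk (real a)) ?xs a = cD (\<lambda>n. poly rk (real n)) ?xs a"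
        using cD_diff[of "\<lambda>n. poly rk (real n)" "\<lambda>_. poly rk (real a)"] cD_const[OF xsne] by simp
      ultimately show ?thesis by simp
    qed
    then obtain z2 :: int where z2: "cD (\<lambda>n. poly rk (real n)) ?xs a = of_int z2" by (auto elim: Ints_cases)
    have etab: "\<bar>cD (\<lambda>n. \<eta> * real n ^ kk) ?xs a\<bar> \<le> 2 ^ length ?xs * (E * Bq)"
      by (rule cD_bound) (use av eta_n in auto)
    have "length ?xs = r" using rj by (simp add: length_cx)
    then have "(2::real) ^ length ?xs \<le> 2 ^ kk" using rj by (intro power_increasing) auto
    then have "2 ^ length ?xs * (E * Bq) \<le> 2 ^ kk * (E * Bq)" using E0 Bq1 by (intro mult_right_mono) auto
    with etab have etab': "\<bar>cD (\<lambda>n. \<eta> * real n ^ kk) ?xs a\<bar> \<le> 2 ^ kk * (E * Bq)" by linarith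
    ultimately have "\<bar>cD (\<lambda>n. poly P' (real n)) ?xs a - of_int (z - z2)\<bar> \<le> E'"
      using z z2 etab' by (simp add: E'_def algebra_simps abs_if split: if_splits)
    then show "\<exists>a. (\<forall>v\<in>cvert ?xs a. v < q ^ L) \<and> (\<exists>z::int. \<bar>cD (\<lambda>n. poly P' (real n)) ?xs a - z\<bar> \<le> E')"
      using av by blast
  qed
  have E'0: "0 \<le> E'" using E0 Bq1 by (simp add: E'_def)
  have "E' * M' \<le> E * M"
  proof -
    have "E' * M' = E * (M' * (1 + 2^kk * Bq))" by (simp add: E'_def mult_ac)
    also have "\<dots> \<le> E * M" using E0 Mp Bq1 qk by (intro mult_left_mono) (auto simp: M_def)
    finally show ?thesis .
  qed
  then have E'M: "E' * M' \<le> 1" using EM' by linarith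
  have "concl q P' (M' * E') L K2" using IH dP' E'0 E'M L2 HP' by blast
  then obtain \<alpha> \<beta> b' where pb': "perZ b' (q^K2)" and app: "\<forall>n<q^L. \<exists>z::int.
      \<bar>poly P' (real n) - \<alpha> * real n - \<beta> - real_of_rat (poly b' (of_nat n)) - z\<bar> \<le> M' * E'"
    unfolding concl_def by blast
  have perb: "perZ (b' + bk) (q^K2)" using perZ_add pb' perZ_pow[OF perk K2] by blast
  have "\<forall>n<q^L. \<exists>z::int. \<bar>poly P (real n) - \<alpha> * real n - \<beta> - real_of_rat (poly (b' + bk) (of_nat n)) - z\<bar> \<le> M * E"
  proof (intro allI impI)
    fix n :: nat assume n: "n < q ^ L"
    obtain z :: int where z: "\<bar>poly P' (real n) - \<alpha> * real n - \<beta> - real_of_rat (poly b' (of_nat n)) - z\<bar> \<le> M' * E'"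
      using app n by blast
    have "poly P (real n) = poly P' (real n) + poly rk (real n) + \<eta> * real n ^ kk"
      by (simp add: P'_def poly_monom)
    moreover have "real_of_rat (poly (b' + bk) (of_nat n)) = real_of_rat (poly b' (of_nat n)) + poly rk (real n)"
      by (simp add: rk_eval of_rat_add)
    ultimately have eq: "poly P (real n) - \<alpha> * real n - \<beta> - real_of_rat (poly (b' + bk) (of_nat n)) - z
       = (poly P' (real n) - \<alpha> * real n - \<beta> - real_of_rat (poly b' (of_nat n)) - z) + \<eta> * real n ^ kk"
      by simp
    have "M' * E' + E * Bq \<le> M * E"
      using E0 qk by (simp add: M_def E'_def algebra_simps)
    then have "\<bar>poly P (real n) - \<alpha> * real n - \<beta> - real_of_rat (poly (b' + bk) (of_nat n)) - z\<bar> \<le> M * E"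
      unfolding eq using z eta_n[OF n] abs_triangle_ineq[of "poly P' (real n) - \<alpha> * real n - \<beta> - real_of_rat (poly b' (of_nat n)) - z" "\<eta> * real n ^ kk"]
      by linarith
    then show "\<exists>z::int. \<bar>poly P (real n) - \<alpha> * real n - \<beta> - real_of_rat (poly (b' + bk) (of_nat n)) - z\<bar> \<le> M * E"
      by blast
  qed
  then show ?thesis unfolding concl_def M_def Bq_def using perb by blast
qed

lemma main:
  assumes q: "q \<ge> 2"
  shows "\<forall>K0. \<exists>M>0. \<exists>K'\<ge>K0. \<exists>L'. \<forall>P E L. degree P \<le> k \<and> 0 \<le> E \<and> E * M \<le> 1 \<and> L' \<le> L \<and>
           HH q P E K0 L k \<longrightarrow> concl q P (M * E) L K'"
proof (induction k)
  case 0
  show ?case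
  proof
    fix K0
    show "\<exists>M>0. \<exists>K'\<ge>K0. \<exists>L'. \<forall>P E L. degree P \<le> 0 \<and> 0 \<le> E \<and> E * M \<le> 1 \<and> L' \<le> L \<and>
           HH q P E K0 L 0 \<longrightarrow> concl q P (M * E) L K'"
      by (intro exI[of _ 1] conjI exI[of _ K0] exI[of _ 0] allI impI) (auto intro: base_case)
  qed
next
  case (Suc k)
  show ?case
  proof
    fix K0
    show "\<exists>M>0. \<exists>K'\<ge>K0. \<exists>L'. \<forall>P E L. degree P \<le> Suc k \<and> 0 \<le> E \<and> E * M \<le> 1 \<and> L' \<le> L \<and>
           HH q P E K0 L (Suc k) \<longrightarrow> concl q P (M * E) L K'"
    proof (cases "k = 0")
      case True
      then show ?thesis
        by (intro exI[of _ 1] conjI exI[of _ K0] exI[of _ 0] allI impI) (auto intro: base_case)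
    next
      case False
      define kk where "kk = Suc k"
      have kk: "kk \<ge> 2" using False by (simp add: kk_def)
      define K1 where "K1 = kk - 1 + kk * K0 + kk"
      obtain M' K2 L2 where Mp: "M' > 0" and K2: "K2 \<ge> K1" and
        IH: "\<forall>P E L. degree P \<le> k \<and> 0 \<le> E \<and> E * M' \<le> 1 \<and> L2 \<le> L \<and>
           HH q P E K1 L k \<longrightarrow> concl q P (M' * E) L K2"
        using Suc.IH by blast
      have IH': "\<forall>P E L. degree P \<le> kk - 1 \<and> 0 \<le> E \<and> E * M' \<le> 1 \<and> L2 \<le> L \<and>
           HH q P E K1 L (kk - 1) \<longrightarrow> concl q P (M' * E) L K2"
        using IH by (simp add: kk_def)
      define M where "M = real q ^ (kk^2+1) + M' * (1 + 2^kk * real q ^ (kk^2+1)) + 2 * (real q ^ kk + 1)"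
      have "real q ^ (kk^2+1) \<ge> 0" "real q ^ kk \<ge> 0" "M' * (1 + 2^kk * real q ^ (kk^2+1)) \<ge> 0"
        using Mp by auto
      moreover have "2 * (real q ^ kk + 1) > 0" using q by (simp add: add_pos_nonneg)
      ultimately have M0: "M > 0" unfolding M_def by (intro add_nonneg_pos add_nonneg_nonneg) auto
      have "K0 \<le> kk * K0" using kk by simp
      then have K0K2: "K0 \<le> K2" using K2 unfolding K1_def by linarith
      have "\<forall>P E L. degree P \<le> kk \<and> 0 \<le> E \<and> E * M \<le> 1 \<and> max L2 (K0 + kk + 1) \<le> L \<and>
           HH q P E K0 L kk \<longrightarrow> concl q P (M * E) L K2"
      proof (intro allI impI)
        fix P E L assume a: "degree P \<le> kk \<and> 0 \<le> E \<and> E * M \<le> 1 \<and> max L2 (K0 + kk + 1) \<le> L \<and>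
           HH q P E K0 L kk"
        show "concl q P (M * E) L K2" unfolding M_def
          by (rule step[OF q kk K1_def K2 Mp IH']) (use a in \<open>auto simp: M_def\<close>)
      qed
      then show ?thesis using M0 K0K2 unfolding kk_def by blast
    qed
  qed
qed

lemma e_add: "e (x + y) = e x * e y"
  by (simp add: e_def distrib_left exp_add)

lemma e_int: "e (x + of_int z) = e x"
proof -
  have "e (of_int z) = exp (\<i> * (complex_of_int z * (complex_of_real pi * 2)))"
    by (simp add: e_def mult_ac)
  also have "\<dots> = 1" by (rule exp_2pi_1_int)
  finally show ?thesis by (simp add: e_add)
qed

lemma e_one: "e t = 1 \<Longrightarrow> \<exists>z::int. t = of_int z"
proof -
  assume "e t = 1"
  then have "exp (2 * pi * \<i> * complex_of_real t) = 1" by (simp add: e_def)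
  then obtain n :: int where "Im (2 * pi * \<i> * complex_of_real t) = real_of_int (2 * n) * pi"
    unfolding exp_eq_1 by blast
  then have "2 * pi * t = 2 * real_of_int n * pi" by simp
  then have "t = of_int n" using pi_gt_zero by (simp add: mult_ac)
  then show ?thesis by blast
qed

lemma e_eq: "e x = e y \<Longrightarrow> \<exists>z::int. x = y + of_int z"
proof -
  assume h: "e x = e y"
  have "e x = e (x - y) * e y" by (simp add: e_add[symmetric])
  moreover have "e y \<noteq> 0" by (simp add: e_def)
  ultimately have "e (x - y) = 1" using h by simp
  then obtain z :: int where "x - y = of_int z" using e_one by blast
  then show ?thesis by (intro exI[of _ z]) simp
qed

definition ph :: "(nat \<Rightarrow> complex) \<Rightarrow> nat \<Rightarrow> real" where
  "ph f n = Arg (f n) / (2 * pi)"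

lemma e_ph: "norm (f n) = 1 \<Longrightarrow> e (ph f n) = f n"
proof -
  assume n1: "norm (f n) = 1"
  then have nz: "f n \<noteq> 0" by auto
  have "e (ph f n) = exp (\<i> * complex_of_real (Arg (f n)))"
    unfolding e_def ph_def by (simp add: field_simps)
  also have "\<dots> = cis (Arg (f n))" by (simp add: cis_conv_exp)
  also have "\<dots> = sgn (f n)" using nz by (rule cis_Arg)
  also have "\<dots> = f n" using n1 by (simp add: sgn_div_norm)
  finally show ?thesis .
qed

lemma qmult_step:
  assumes qm: "q_multiplicative q f" and v: "v mod q ^ (j+1) < q ^ j" and q: "q \<ge> 2"
  shows "f (v + q ^ j) = f v * f (q ^ j)"
proof -
  define u where "u = v mod q ^ (j+1)"
  define w where "w = q ^ (j+1) * (v div q ^ (j+1))"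
  have vuw: "v = u + w" by (simp add: u_def w_def)
  have u: "u < q ^ j" using v by (simp add: u_def)
  have qjj: "q ^ j < q ^ (j+1)" using q by simp
  have m: "\<And>t m n. m < q ^ t \<Longrightarrow> q ^ t dvd n \<Longrightarrow> f (m + n) = f m * f n"
    using qm unfolding q_multiplicative_def by blast
  have "f (v + q ^ j) = f (u + (q ^ j + w))" by (simp add: vuw ac_simps)
  also have "\<dots> = f u * f (q ^ j + w)"
    by (rule m[OF u]) (simp add: w_def)
  also have "f (q ^ j + w) = f (q ^ j) * f w"
    by (rule m[OF qjj]) (simp add: w_def)
  also have "f v = f u * f w" unfolding vuw
    by (rule m[of _ "j+1"]) (use u qjj w_def in \<open>auto simp del: power_Suc\<close>)
  ultimately show ?thesis by (simp add: mult_ac)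
qed

lemma cube_lemma:
  assumes qm: "q_multiplicative q f" and nf: "\<forall>n. norm (f n) = 1" and q: "q \<ge> 2"
    and r: "r \<ge> 2" and amod: "a mod q ^ (j+1) < q ^ j"
    and good: "\<forall>v\<in>cvert (cx q r j) a. \<exists>\<theta>. \<bar>\<theta>\<bar> \<le> \<epsilon> \<and> f v = e (poly p (real v) + \<theta>)"
  shows "\<exists>z::int. \<bar>cD (\<lambda>n. poly p (real n)) (cx q r j) a - z\<bar> \<le> 2 ^ r * \<epsilon>"
proof -
  define th where "th v = (SOME \<theta>. \<bar>\<theta>\<bar> \<le> \<epsilon> \<and> f v = e (poly p (real v) + \<theta>))" for v
  have th: "\<bar>th v\<bar> \<le> \<epsilon> \<and> f v = e (poly p (real v) + th v)" if "v \<in> cvert (cx q r j) a" for v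
    unfolding th_def using someI_ex[OF good[rule_format, OF that]] .
  define g where "g n = poly p (real n) + th n - ph f n" for n
  have gI: "\<forall>v\<in>cvert (cx q r j) a. g v \<in> \<int>"
  proof
    fix v assume v: "v \<in> cvert (cx q r j) a"
    have "e (poly p (real v) + th v) = e (ph f v)" using th[OF v] e_ph nf by metis
    then obtain z :: int where "poly p (real v) + th v = ph f v + of_int z" using e_eq by blast
    then show "g v \<in> \<int>" by (simp add: g_def)
  qed
  define xs where "xs = replicate (r - 1) (q ^ (j+1))"
  have cxe: "cx q r j = q ^ j # xs" by (simp add: cx_def xs_def)
  have xsne: "xs \<noteq> []" using r by (simp add: xs_def)
  have phstep: "\<forall>v\<in>cvert xs a. ph f (v + q ^ j) - ph f v - ph f (q ^ j) \<in> \<int>"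
  proof
    fix v assume v: "v \<in> cvert xs a"
    have "q ^ (j+1) dvd v - a" using cvert_dvd[OF _ v] by (simp add: xs_def)
    moreover have "a \<le> v" using cvert_ge[OF v] by simp
    ultimately have "v mod q ^ (j+1) = a mod q ^ (j+1)"
      by (metis le_add_diff_inverse mod_add_self2 dvdE mod_mult_self2 mult.commute)
    then have "v mod q ^ (j+1) < q ^ j" using amod by simp
    then have "f (v + q ^ j) = f v * f (q ^ j)" using qmult_step[OF qm _ q] by blast
    moreover have "e (ph f (v + q ^ j)) = f (v + q ^ j)" "e (ph f v) = f v" "e (ph f (q ^ j)) = f (q ^ j)"
      using e_ph nf by auto
    ultimately have "e (ph f (v + q ^ j)) = e (ph f v + ph f (q ^ j))" by (simp add: e_add)
    then obtain z :: int where "ph f (v + q ^ j) = ph f v + ph f (q ^ j) + of_int z" using e_eq by blast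
    then show "ph f (v + q ^ j) - ph f v - ph f (q ^ j) \<in> \<int>" by simp
  qed
  have phI: "cD (ph f) (cx q r j) a \<in> \<int>"
  proof -
    have "cD (ph f) (cx q r j) a = cD (\<lambda>n. ph f (n + q ^ j) - ph f n) xs a"
      unfolding cxe by (simp add: cD_shift cD_diff)
    also have "\<dots> = cD (\<lambda>n. (ph f (n + q ^ j) - ph f n - ph f (q ^ j)) + ph f (q ^ j)) xs a" by simp
    also have "\<dots> = cD (\<lambda>n. ph f (n + q ^ j) - ph f n - ph f (q ^ j)) xs a"
      using cD_add[of "\<lambda>n. ph f (n + q ^ j) - ph f n - ph f (q ^ j)" "\<lambda>_. ph f (q ^ j)" xs a]
        cD_const[OF xsne] by simp
    finally show ?thesis using cD_Ints[OF phstep] by simp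
  qed
  have "(\<lambda>n. poly p (real n)) = (\<lambda>n. (ph f n + g n) - th n)" by (simp add: g_def fun_eq_iff)
  then have eq: "cD (\<lambda>n. poly p (real n)) (cx q r j) a = (cD (ph f) (cx q r j) a + cD g (cx q r j) a) - cD th (cx q r j) a"
    using cD_diff[of "\<lambda>n. ph f n + g n" th] cD_add[of "ph f" g] by simp
  obtain z1 :: int where z1: "cD (ph f) (cx q r j) a = of_int z1" using phI by (auto elim: Ints_cases)
  obtain z2 :: int where z2: "cD g (cx q r j) a = of_int z2" using cD_Ints[OF gI] by (auto elim: Ints_cases)
  have "\<bar>cD th (cx q r j) a\<bar> \<le> 2 ^ length (cx q r j) * \<epsilon>"
    by (rule cD_bound) (use th in blast)
  then have "\<bar>cD th (cx q r j) a\<bar> \<le> 2 ^ r * \<epsilon>" using r by (simp add: length_cx)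
  then have "\<bar>cD (\<lambda>n. poly p (real n)) (cx q r j) a - of_int (z1 + z2)\<bar> \<le> 2 ^ r * \<epsilon>"
    unfolding eq z1 z2 by simp
  then show ?thesis by blast
qed

lemma two_r_le: "r \<ge> 1 \<Longrightarrow> 2 * r \<le> (2::nat) ^ r"
proof (induction r)
  case 0 then show ?case by simp
next
  case (Suc r)
  show ?case
  proof (cases "r = 0")
    case True then show ?thesis by simp
  next
    case False
    then have "2 * r \<le> 2 ^ r" using Suc by simp
    moreover have "2 \<le> (2::nat) ^ r" using False by (metis One_nat_def le_add1 one_le_numeral plus_1_eq_Suc power_increasing power_one_right Suc_le_eq not_gr_zero)
    ultimately show ?thesis by simp
  qed
qed

lemma density:
  fixes q r j L :: nat and Bad :: "nat set"
  assumes q: "q \<ge> 2" and r: "r \<ge> 1" and jr: "j + 1 + r \<le> L" and fin: "finite Bad"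
    and cB: "4 * r * q * card Bad < q ^ L"
  shows "\<exists>a. a mod q ^ (j+1) < q ^ j \<and> (\<forall>v\<in>cvert (cx q r j) a. v < q ^ L \<and> v \<notin> Bad)"
proof -
  define T where "T = L - j - 1"
  have LT: "L = j + 1 + T" using jr by (simp add: T_def)
  have Tr: "r \<le> T" using jr by (simp add: T_def)
  have "2 * r \<le> 2 ^ r" using r by (rule two_r_le)
  also have "(2::nat) ^ r \<le> 2 ^ T" using Tr by (intro power_increasing) auto
  also have "(2::nat) ^ T \<le> q ^ T" using q by (intro power_mono) auto
  finally have qT: "2 * r \<le> q ^ T" .
  define W where "W = q ^ T - (r - 1)"
  have W1: "W \<ge> 1" using qT r by (simp add: W_def)
  have W2: "q ^ T < 2 * W" using qT r by (simp add: W_def)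
  define PP where "PP = {..<q^j} \<times> {..<W}"
  define G where "G e m \<pi> = fst \<pi> + e * q ^ j + (snd \<pi> + m) * q ^ (j+1)" for e m :: nat and \<pi> :: "nat \<times> nat"
  define Bp where "Bp = (\<Union>em\<in>{..<2} \<times> {..<r}. {\<pi>\<in>PP. G (fst em) (snd em) \<pi> \<in> Bad})"
  have "2 * q ^ j \<le> q * q ^ j" using q by (intro mult_right_mono) auto
  then have qj: "q ^ j + q ^ j \<le> q ^ (j+1)" by (simp only: mult_2 power_Suc add.commute[of j 1] plus_1_eq_Suc)
  have lowpart: "x + e * q ^ j < q ^ (j+1)" if "x < q ^ j" "e < 2" for x e :: nat
    using that qj by (cases e) auto
  have inj: "inj_on (G e m) PP" if e: "e < 2" for e m
  proof (rule inj_onI)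
    fix \<pi>1 \<pi>2 assume p1: "\<pi>1 \<in> PP" and p2: "\<pi>2 \<in> PP" and eq: "G e m \<pi>1 = G e m \<pi>2"
    have l1: "fst \<pi>1 + e * q ^ j < q ^ (j+1)" using p1 e lowpart by (auto simp: PP_def)
    have l2: "fst \<pi>2 + e * q ^ j < q ^ (j+1)" using p2 e lowpart by (auto simp: PP_def)
    have "G e m \<pi>1 mod q ^ (j+1) = fst \<pi>1 + e * q ^ j" using l1 q by (simp add: G_def add.assoc[symmetric])
    moreover have "G e m \<pi>2 mod q ^ (j+1) = fst \<pi>2 + e * q ^ j" using l2 q by (simp add: G_def add.assoc[symmetric])
    ultimately have f: "fst \<pi>1 = fst \<pi>2" using eq by simp
    have "G e m \<pi>1 div q ^ (j+1) = snd \<pi>1 + m" using l1 q by (simp add: G_def add.assoc[symmetric])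
    moreover have "G e m \<pi>2 div q ^ (j+1) = snd \<pi>2 + m" using l2 q by (simp add: G_def add.assoc[symmetric])
    ultimately have "snd \<pi>1 = snd \<pi>2" using eq by simp
    then show "\<pi>1 = \<pi>2" using f by (simp add: prod_eq_iff)
  qed
  have cardEach: "card {\<pi>\<in>PP. G e m \<pi> \<in> Bad} \<le> card Bad" if "e < 2" for e m
  proof (rule card_inj_on_le[OF _ _ fin])
    show "inj_on (G e m) {\<pi> \<in> PP. G e m \<pi> \<in> Bad}" using inj[OF that] by (rule inj_on_subset) auto
    show "G e m ` {\<pi> \<in> PP. G e m \<pi> \<in> Bad} \<subseteq> Bad" by auto
  qed
  have "card Bp \<le> (\<Sum>em\<in>{..<2} \<times> {..<r}. card {\<pi>\<in>PP. G (fst em) (snd em) \<pi> \<in> Bad})"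
    unfolding Bp_def by (rule card_UN_le) simp
  also have "\<dots> \<le> (\<Sum>em\<in>{..<2::nat} \<times> {..<r}. card Bad)"
    by (intro sum_mono) (use cardEach in auto)
  also have "\<dots> = 2 * r * card Bad" by simp
  finally have cBp: "card Bp \<le> 2 * r * card Bad" .
  have cPi: "card PP = q ^ j * W" by (simp add: PP_def card_cartesian_product)
  have "q * (4 * r * card Bad) < q * q ^ (j + T)" using cB unfolding LT by (simp add: mult_ac)
  then have "4 * r * card Bad < q ^ j * q ^ T" using q by (simp add: power_add)
  also have "q ^ j * q ^ T < q ^ j * (2 * W)" using W2 q by simp
  finally have "2 * r * card Bad < q ^ j * W" by (simp add: mult_ac)
  then have "card Bp < card PP" using cBp cPi by simp
  moreover have "Bp \<subseteq> PP" by (auto simp: Bp_def)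
  ultimately have "\<not> PP \<subseteq> Bp" by auto
  then obtain x y where xy: "(x, y) \<in> PP" "(x, y) \<notin> Bp" by auto
  have x: "x < q ^ j" and y: "y < W" using xy by (auto simp: PP_def)
  define a where "a = x + y * q ^ (j+1)"
  have "q ^ j < q ^ (j+1)" using q by simp
  then have xl: "x < q ^ (j+1)" using x by linarith
  have amod: "a mod q ^ (j+1) = x" unfolding a_def using xl by (simp only: mod_mult_self1 mod_less)
  have vform: "\<exists>e m. e < 2 \<and> m < r \<and> v = G e m (x, y)" if v: "v \<in> cvert (cx q r j) a" for v
  proof -
    have "v \<in> cvert (replicate (r-1) (q^(j+1))) a \<or> v \<in> cvert (replicate (r-1) (q^(j+1))) (a + q^j)"
      using v by (simp add: cx_def)
    then show ?thesis
    proof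
      assume "v \<in> cvert (replicate (r-1) (q^(j+1))) a"
      then obtain m where "m \<le> r - 1" "v = a + m * q^(j+1)" using cvert_rep by blast
      then show ?thesis using r by (intro exI[of _ 0] exI[of _ m]) (auto simp: G_def a_def algebra_simps)
    next
      assume "v \<in> cvert (replicate (r-1) (q^(j+1))) (a + q^j)"
      then obtain m where "m \<le> r - 1" "v = a + q^j + m * q^(j+1)" using cvert_rep by blast
      then show ?thesis using r by (intro exI[of _ 1] exI[of _ m]) (auto simp: G_def a_def algebra_simps)
    qed
  qed
  have "\<forall>v\<in>cvert (cx q r j) a. v < q ^ L \<and> v \<notin> Bad"
  proof
    fix v assume v: "v \<in> cvert (cx q r j) a"
    obtain e m where em: "e < 2" "m < r" "v = G e m (x, y)" using vform[OF v] by blast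
    have "v \<notin> Bad" using xy em by (auto simp: Bp_def)
    moreover have "v < q ^ L"
    proof -
      have "x + e * q ^ j < q ^ (j+1)" using lowpart x em by simp
      then have "v < q ^ (j+1) + (y + m) * q ^ (j+1)" using em by (simp add: G_def)
      also have "\<dots> = (y + m + 1) * q ^ (j+1)" by (simp add: algebra_simps)
      also have "y + m + 1 \<le> q ^ T" using y em W_def W1 by simp
      then have "(y + m + 1) * q ^ (j+1) \<le> q ^ T * q ^ (j+1)" by (rule mult_right_mono) simp
      also have "\<dots> = q ^ L" unfolding LT by (simp add: power_add mult_ac)
      finally show ?thesis .
    qed
    ultimately show "v < q ^ L \<and> v \<notin> Bad" by simp
  qed
  then show ?thesis using amod x by blast
qed

theorem proposition4p1:
  fixes q s :: nat
  assumes "q \<ge> 2" and "s \<ge> 2"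
  shows "\<exists>\<epsilon>0::real. \<epsilon>0 > 0 \<and> (\<exists>\<delta>0::real. \<delta>0 > 0 \<and> (\<exists>L0::nat. L0 > 0 \<and>
          (\<exists>C::real. C > 0 \<and> (\<exists>k0::nat.
    \<forall>(f :: nat \<Rightarrow> complex) (p :: real poly) (\<epsilon>::real) (\<delta>::real) (L::nat).
      (\<forall>n. norm (f n) = 1) \<and> q_multiplicative q f \<and> degree p < s \<and>
      \<epsilon> < \<epsilon>0 \<and> \<delta> < \<delta>0 \<and> L \<ge> L0 \<and>
      real (card {n. n < q ^ L \<and>
         \<not> (\<exists>\<theta>. \<bar>\<theta>\<bar> \<le> \<epsilon> \<and> f n = e (poly p (real n) + \<theta>))}) \<le> \<delta> * real q ^ L
      \<longrightarrow>
      (\<exists>(\<alpha>::real) (\<beta>::real) (b :: rat poly) (k::nat). k \<le> k0 \<and>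
         (\<forall>n::nat. frac (poly b (of_nat (n + q ^ k))) = frac (poly b (of_nat n))) \<and>
         real (card {n. n < q ^ L \<and>
           \<not> (\<exists>\<theta>'. \<bar>\<theta>'\<bar> \<le> C * \<epsilon> \<and>
                f n = e (\<alpha> * real n + \<beta> + real_of_rat (poly b (of_nat n)) + \<theta>'))})
           \<le> \<delta> * real q ^ L)))))"
  proof -
  have q: "q \<ge> 2" using assms(1) .
  have s: "s \<ge> 2" using assms(2) .
  obtain M K' L' where M: "M > 0" and
    mainP: "\<forall>P E L. degree P \<le> s - 1 \<and> 0 \<le> E \<and> E * M \<le> 1 \<and> L' \<le> L \<and>
           HH q P E 0 L (s - 1) \<longrightarrow> concl q P (M * E) L K'"
    using main[OF q, of "s - 1"] by blast
  define \<epsilon>0 :: real where "\<epsilon>0 = 1 / (M * 2 ^ s)"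
  define \<delta>0 :: real where "\<delta>0 = 1 / (4 * real s * real q)"
  define L0 :: nat where "L0 = max L' 1"
  define C :: real where "C = M * 2 ^ s + 1"
  have qpos: "real q > 0" using q by simp
  have spos: "real s > 0" using s by simp
  have key: "\<forall>(f :: nat \<Rightarrow> complex) (p :: real poly) (\<epsilon>::real) (\<delta>::real) (L::nat).
      (\<forall>n. norm (f n) = 1) \<and> q_multiplicative q f \<and> degree p < s \<and>
      \<epsilon> < \<epsilon>0 \<and> \<delta> < \<delta>0 \<and> L \<ge> L0 \<and>
      real (card {n. n < q ^ L \<and>
         \<not> (\<exists>\<theta>. \<bar>\<theta>\<bar> \<le> \<epsilon> \<and> f n = e (poly p (real n) + \<theta>))}) \<le> \<delta> * real q ^ L
      \<longrightarrow>
      (\<exists>(\<alpha>::real) (\<beta>::real) (b :: rat poly) (k::nat). k \<le> K' \<and>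
         (\<forall>n::nat. frac (poly b (of_nat (n + q ^ k))) = frac (poly b (of_nat n))) \<and>
         real (card {n. n < q ^ L \<and>
           \<not> (\<exists>\<theta>'. \<bar>\<theta>'\<bar> \<le> C * \<epsilon> \<and>
                f n = e (\<alpha> * real n + \<beta> + real_of_rat (poly b (of_nat n)) + \<theta>'))})
           \<le> \<delta> * real q ^ L)"
  proof (intro allI impI)
    fix f :: "nat \<Rightarrow> complex" and p :: "real poly" and \<epsilon> \<delta> :: real and L :: nat
    assume hyp: "(\<forall>n. norm (f n) = 1) \<and> q_multiplicative q f \<and> degree p < s \<and>
      \<epsilon> < \<epsilon>0 \<and> \<delta> < \<delta>0 \<and> L \<ge> L0 \<and>
      real (card {n. n < q ^ L \<and>
         \<not> (\<exists>\<theta>. \<bar>\<theta>\<bar> \<le> \<epsilon> \<and> f n = e (poly p (real n) + \<theta>))}) \<le> \<delta> * real q ^ L"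
    have nf: "\<forall>n. norm (f n) = 1" and qm: "q_multiplicative q f" and dp: "degree p < s"
      and e\<epsilon>: "\<epsilon> < \<epsilon>0" and d\<delta>: "\<delta> < \<delta>0" and LL: "L \<ge> L0" using hyp by auto
    define Bad where "Bad = {n. n < q ^ L \<and> \<not> (\<exists>\<theta>. \<bar>\<theta>\<bar> \<le> \<epsilon> \<and> f n = e (poly p (real n) + \<theta>))}"
    have hB: "real (card Bad) \<le> \<delta> * real q ^ L" using hyp by (simp add: Bad_def)
    have finB: "finite Bad" by (rule finite_subset[of _ "{..<q^L}"]) (auto simp: Bad_def)
    have qL: "real q ^ L > 0" using qpos by simp
    have "4 * real s * real q * real (card Bad) \<le> 4 * real s * real q * (\<delta> * real q ^ L)"
      using hB spos qpos by (intro mult_left_mono) auto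
    also have "\<dots> < 4 * real s * real q * (\<delta>0 * real q ^ L)"
      using d\<delta> spos qpos qL by (intro mult_strict_left_mono) auto
    also have "\<dots> = real q ^ L" using spos qpos by (simp add: \<delta>0_def)
    finally have "real (4 * s * q * card Bad) < real (q ^ L)" by simp
    then have cB: "4 * s * q * card Bad < q ^ L" by (simp only: of_nat_less_iff)
    have \<epsilon>nn: "\<epsilon> \<ge> 0"
    proof (rule ccontr)
      assume "\<not> \<epsilon> \<ge> 0"
      then have "Bad = {..<q^L}" by (auto simp: Bad_def)
      then have "card Bad = q ^ L" by simp
      moreover have "1 \<le> 4 * s * q" using s q by simp
      ultimately have "q ^ L \<le> 4 * s * q * card Bad" by simp
      then show False using cB by simp
    qed
    have HHp: "HH q p (2 ^ s * \<epsilon>) 0 L (s - 1)"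
      unfolding HH_def
    proof (intro allI impI)
      fix r j assume rj: "2 \<le> r \<and> r \<le> s - 1 \<and> 0 \<le> j \<and> j + 1 + r \<le> L"
      have "4 * r * q * card Bad \<le> 4 * s * q * card Bad" using rj by (intro mult_right_mono) auto
      then have cBr: "4 * r * q * card Bad < q ^ L" using cB by linarith
      obtain a where amod: "a mod q ^ (j+1) < q ^ j" and av: "\<forall>v\<in>cvert (cx q r j) a. v < q ^ L \<and> v \<notin> Bad"
        using density[OF q _ _ finB cBr] rj by auto
      have good: "\<forall>v\<in>cvert (cx q r j) a. \<exists>\<theta>. \<bar>\<theta>\<bar> \<le> \<epsilon> \<and> f v = e (poly p (real v) + \<theta>)"
        using av by (auto simp: Bad_def)
      obtain z :: int where z: "\<bar>cD (\<lambda>n. poly p (real n)) (cx q r j) a - z\<bar> \<le> 2 ^ r * \<epsilon>"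
        using cube_lemma[OF qm nf q _ amod good] rj by auto
      have "(2::real) ^ r \<le> 2 ^ s" using rj by (intro power_increasing) auto
      then have "2 ^ r * \<epsilon> \<le> 2 ^ s * \<epsilon>" using \<epsilon>nn by (intro mult_right_mono) auto
      then have z': "\<bar>cD (\<lambda>n. poly p (real n)) (cx q r j) a - z\<bar> \<le> 2 ^ s * \<epsilon>" using z by linarith
      have av': "\<forall>v\<in>cvert (cx q r j) a. v < q ^ L" using av by blast
      show "\<exists>a. (\<forall>v\<in>cvert (cx q r j) a. v < q ^ L) \<and>
          (\<exists>z::int. \<bar>cD (\<lambda>n. poly p (real n)) (cx q r j) a - z\<bar> \<le> 2 ^ s * \<epsilon>)"
        using av' z' by blast
    qed
    have EM: "2 ^ s * \<epsilon> * M \<le> 1"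
    proof -
      have "2 ^ s * \<epsilon> * M = \<epsilon> * (M * 2 ^ s)" by (simp add: mult_ac)
      also have "\<dots> \<le> \<epsilon>0 * (M * 2 ^ s)" using e\<epsilon> M by (intro mult_right_mono) auto
      also have "\<dots> = 1" using M by (simp add: \<epsilon>0_def)
      finally show ?thesis .
    qed
    have "concl q p (M * (2 ^ s * \<epsilon>)) L K'"
      using mainP dp EM \<epsilon>nn LL HHp by (auto simp: L0_def)
    then obtain \<alpha> \<beta> b where pb: "perZ b (q ^ K')" and app: "\<forall>n<q^L. \<exists>z::int.
      \<bar>poly p (real n) - \<alpha> * real n - \<beta> - real_of_rat (poly b (of_nat n)) - z\<bar> \<le> M * (2 ^ s * \<epsilon>)"
      unfolding concl_def by blast
    have per: "\<forall>n::nat. frac (poly b (of_nat (n + q ^ K'))) = frac (poly b (of_nat n))"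
    proof
      fix n :: nat
      have "poly b (of_nat (n + 1 * q ^ K')) - poly b (of_nat n) \<in> \<int>" using pb unfolding perZ_def by blast
      then obtain w where "poly b (of_nat (n + q ^ K')) - poly b (of_nat n) = of_int w" by (auto elim: Ints_cases)
      then have "poly b (of_nat (n + q ^ K')) = poly b (of_nat n) + of_int w" by (simp add: algebra_simps)
      then show "frac (poly b (of_nat (n + q ^ K'))) = frac (poly b (of_nat n))" by (simp add: frac_add_of_int_right)
    qed
    have sub: "{n. n < q ^ L \<and>
           \<not> (\<exists>\<theta>'. \<bar>\<theta>'\<bar> \<le> C * \<epsilon> \<and>
                f n = e (\<alpha> * real n + \<beta> + real_of_rat (poly b (of_nat n)) + \<theta>'))} \<subseteq> Bad"
    proof
      fix n assume n: "n \<in> {n. n < q ^ L \<and>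
           \<not> (\<exists>\<theta>'. \<bar>\<theta>'\<bar> \<le> C * \<epsilon> \<and>
                f n = e (\<alpha> * real n + \<beta> + real_of_rat (poly b (of_nat n)) + \<theta>'))}"
      show "n \<in> Bad"
      proof (rule ccontr)
        assume "n \<notin> Bad"
        then obtain \<theta> where th: "\<bar>\<theta>\<bar> \<le> \<epsilon>" "f n = e (poly p (real n) + \<theta>)" using n by (auto simp: Bad_def)
        obtain z :: int where z: "\<bar>poly p (real n) - \<alpha> * real n - \<beta> - real_of_rat (poly b (of_nat n)) - z\<bar> \<le> M * (2 ^ s * \<epsilon>)"
          using app n by auto
        define \<theta>' where "\<theta>' = poly p (real n) - \<alpha> * real n - \<beta> - real_of_rat (poly b (of_nat n)) - z + \<theta>"
        have thb: "\<bar>\<theta>'\<bar> \<le> C * \<epsilon>" using z th by (simp add: \<theta>'_def C_def algebra_simps)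
        have "e (\<alpha> * real n + \<beta> + real_of_rat (poly b (of_nat n)) + \<theta>') = e (poly p (real n) + \<theta> + of_int (- z))"
          by (simp add: \<theta>'_def algebra_simps)
        also have "\<dots> = e (poly p (real n) + \<theta>)" by (rule e_int)
        finally have "f n = e (\<alpha> * real n + \<beta> + real_of_rat (poly b (of_nat n)) + \<theta>')" using th by simp
        then show False using n thb by blast
      qed
    qed
    have "card {n. n < q ^ L \<and>
           \<not> (\<exists>\<theta>'. \<bar>\<theta>'\<bar> \<le> C * \<epsilon> \<and>
                f n = e (\<alpha> * real n + \<beta> + real_of_rat (poly b (of_nat n)) + \<theta>'))} \<le> card Bad"
      by (rule card_mono[OF finB sub])
    then have "real (card {n. n < q ^ L \<and>
           \<not> (\<exists>\<theta>'. \<bar>\<theta>'\<bar> \<le> C * \<epsilon> \<and>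
                f n = e (\<alpha> * real n + \<beta> + real_of_rat (poly b (of_nat n)) + \<theta>'))}) \<le> \<delta> * real q ^ L"
      using hB by linarith
    then show "\<exists>(\<alpha>::real) (\<beta>::real) (b :: rat poly) (k::nat). k \<le> K' \<and>
         (\<forall>n::nat. frac (poly b (of_nat (n + q ^ k))) = frac (poly b (of_nat n))) \<and>
         real (card {n. n < q ^ L \<and>
           \<not> (\<exists>\<theta>'. \<bar>\<theta>'\<bar> \<le> C * \<epsilon> \<and>
                f n = e (\<alpha> * real n + \<beta> + real_of_rat (poly b (of_nat n)) + \<theta>'))})
           \<le> \<delta> * real q ^ L"
      using per by blast
  qed
  have "\<epsilon>0 > 0" using M by (simp add: \<epsilon>0_def)
  moreover have "\<delta>0 > 0" using spos qpos by (simp add: \<delta>0_def)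
  moreover have "L0 > 0" by (simp add: L0_def)
  moreover have "C > 0" using M by (simp add: C_def add_pos_nonneg)
  ultimately show ?thesis using key by blast
qed

end
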